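(* Let $G_\bullet$ be a filtration of length $d$ on a nilpotent Lie group $G$ and $\Gamma<G$ a discrete cocompact subgroup such that $G_\bullet$ is $\Gamma$-rational. A map $\bar f:\mathscr F_\emptyset\to G/\Gamma$ belongs to $\mathrm{poly}(\mathscr F_\emptyset\to G_\bullet/\Gamma)$ if and only if for every $k\ge0$ and every parallelepiped $(\alpha_\omega)_{\omega\in\{0,1\}^k}\in\mathscr F_\emptyset^{[k]}$ the cube $(\bar f(\alpha_\omega))_{\omega\in\{0,1\}^k}$ lies in $\mathrm{HK}^k(G_\bullet/\Gamma)$.
   Context: $\mathscr F$ is the family of finite non-empty subsets of $\mathbb N=\{1,2,\dots\}$, $\mathscr F_\emptyset=\mathscr F\cup\{\emptyset\}$. A filtration $G_\bullet$: Lie subgroups $G=G_0=G_1\supseteq G_2\supseteq\cdots$ with $[G_i,G_j]\subseteq G_{i+j}$ and $G_{d+1}=\{e\}$ ($d$ minimal = length); $G_{\bullet+1}$ is $i\mapsto G_{i+1}$. $\Gamma$-rational: $G_i\cap\Gamma$ is cocompact in $G_i$ for all $i$. A map $g:\mathscr F_\emptyset\to G$ is in $\mathrm{poly}(\mathscr F_\emptyset\to G_\bullet)$ if either $G_0=\{e\}$ and $g\equiv e$, or for each $\beta\in\mathscr F_\emptyset$ there is $D_\beta g\in\mathrm{poly}(\mathscr F_\emptyset\to G_{\bullet+1})$ with $D_\beta g(\alpha)=g(\alpha)^{-1}g(\alpha\cup\beta)$ whenever $\alpha\cap\beta=\emptyset$; $\mathrm{poly}(\mathscr F_\emptyset\to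 G_\bullet/\Gamma)$ is the set of maps $\alpha\mapsto g(\alpha)\Gamma$ with $g$ such a polynomial. Identify $\{0,1\}^k$ with subsets of $[k]$, ordered by $\omega\le\sigma$ iff $\omega_i\le\sigma_i$ for all $i$; $|\omega|$ is the number of $1$'s. For $g\in G$, $g^{[\omega]}\in G^{\{0,1\}^k}$ has entry $g$ at $\sigma\ge\omega$ and $e$ elsewhere. The Host–Kra cube group $\mathrm{HK}^k(G_\bullet)$ is the subgroup of $G^{\{0,1\}^k}$ generated by all $g^{[\omega]}$ with $\omega\in\{0,1\}^k$ and $g\in G_{|\omega|}$; $\mathrm{HK}^k(G_\bullet/\Gamma)=\mathrm{HK}^k(G_\bullet)/(\Gamma^{\{0,1\}^k}\cap\mathrm{HK}^k(G_\bullet))$, viewed as the image of $\mathrm{HK}^k(G_\bullet)$ in $(G/\Gamma)^{\{0,1\}^k}$. $\mathscr F_\emptyset^{[k]}$ is the set of parallelepipeds: families $(\alpha_\omega)_{\omega\in\{0,1\}^k}$ with $\alpha_\omega=\alpha_0\cup\bigcup_{i\in\omega}\alpha_i$ for some pairwise disjoint $\alpha_0,\alpha_1,\dots,\alpha_k\in\mathscr F_\emptyset$. *)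

theory Defs
  imports "HOL-Analysis.Analysis" "HOL-Algebra.Algebra"
begin

definition topological_group :: "('a, 'b) monoid_scheme \<Rightarrow> 'a topology \<Rightarrow> bool" where
  "topological_group G T \<longleftrightarrow> group G \<and> topspace T = carrier G \<and>
     continuous_map (prod_topology T T) T (\<lambda>(x, y). x \<otimes>\<^bsub>G\<^esub> y) \<and>
     continuous_map T T (\<lambda>x. inv\<^bsub>G\<^esub> x)"

text \<open>A (real) Lie group, modelled as a topological group which is a topological manifold
  (Hausdorff, second countable, locally Euclidean of some fixed dimension n).  By the
  Gleason--Montgomery--Zippin theorem such a group carries a unique compatible analytic
  Lie group structure.\<close>
definition lie_group :: "('a, 'b) monoid_scheme \<Rightarrow> 'a topology \<Rightarrow> bool" where
  "lie_group G T \<longleftrightarrow> topological_group G T \<and> Hausdorff_space T \<and> second_countable T \<and>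
     (\<exists>n. \<forall>x\<in>topspace T. \<exists>U V. openin T U \<and> x \<in> U \<and> openin (Euclidean_space n) V \<and>
          (subtopology T U) homeomorphic_space (subtopology (Euclidean_space n) V))"

text \<open>Lie subgroup of a Lie group: a closed subgroup (closed subgroups are embedded
  Lie subgroups by Cartan's theorem).\<close>
definition lie_subgroup :: "'a set \<Rightarrow> ('a, 'b) monoid_scheme \<Rightarrow> 'a topology \<Rightarrow> bool" where
  "lie_subgroup H G T \<longleftrightarrow> subgroup H G \<and> closedin T H"

definition discrete_subgroup :: "'a set \<Rightarrow> ('a, 'b) monoid_scheme \<Rightarrow> 'a topology \<Rightarrow> bool" where
  "discrete_subgroup \<Gamma> G T \<longleftrightarrow> subgroup \<Gamma> G \<and> subtopology T \<Gamma> = discrete_topology \<Gamma>"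

text \<open>A subgroup \<open>L\<close> of \<open>H\<close> is cocompact in \<open>H\<close> if \<open>H/L\<close> is compact, i.e. there is a compact
  \<open>K \<subseteq> H\<close> with \<open>H = K L\<close>.\<close>
definition cocompact_in :: "'a set \<Rightarrow> 'a set \<Rightarrow> ('a, 'b) monoid_scheme \<Rightarrow> 'a topology \<Rightarrow> bool" where
  "cocompact_in L H G T \<longleftrightarrow> (\<exists>K. K \<subseteq> H \<and> compactin T K \<and> H = K <#>\<^bsub>G\<^esub> L)"

definition filtration :: "('a, 'b) monoid_scheme \<Rightarrow> 'a topology \<Rightarrow> (nat \<Rightarrow> 'a set) \<Rightarrow> nat \<Rightarrow> bool" where
  "filtration G T Gs d \<longleftrightarrow>
     Gs 0 = carrier G \<and> Gs 1 = carrier G \<and>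
     (\<forall>i. lie_subgroup (Gs i) G T) \<and>
     (\<forall>i. Gs (Suc i) \<subseteq> Gs i) \<and>
     (\<forall>i j. \<forall>x\<in>Gs i. \<forall>y\<in>Gs j.
         inv\<^bsub>G\<^esub> x \<otimes>\<^bsub>G\<^esub> inv\<^bsub>G\<^esub> y \<otimes>\<^bsub>G\<^esub> x \<otimes>\<^bsub>G\<^esub> y \<in> Gs (i + j)) \<and>
     Gs (Suc d) = {\<one>\<^bsub>G\<^esub>} \<and> (d = 0 \<or> Gs d \<noteq> {\<one>\<^bsub>G\<^esub>})"

definition rational_filtration :: "('a, 'b) monoid_scheme \<Rightarrow> 'a topology \<Rightarrow> (nat \<Rightarrow> 'a set) \<Rightarrow> 'a set \<Rightarrow> bool" where
  "rational_filtration G T Gs \<Gamma> \<longleftrightarrow> (\<forall>i. cocompact_in (Gs i \<inter> \<Gamma>) (Gs i) G T)"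

definition FE :: "nat set set" where
  "FE = {\<alpha>. finite \<alpha> \<and> 0 \<notin> \<alpha>}"

inductive poly_map :: "('a, 'b) monoid_scheme \<Rightarrow> (nat \<Rightarrow> 'a set) \<Rightarrow> (nat set \<Rightarrow> 'a) \<Rightarrow> bool"
  for G where
  triv: "Gs 0 = {\<one>\<^bsub>G\<^esub>} \<Longrightarrow> (\<forall>\<alpha>\<in>FE. g \<alpha> = \<one>\<^bsub>G\<^esub>) \<Longrightarrow> poly_map G Gs g"
| step: "(\<forall>\<alpha>\<in>FE. g \<alpha> \<in> Gs 0) \<Longrightarrow>
         (\<forall>\<beta>\<in>FE. \<exists>h. poly_map G (\<lambda>i. Gs (Suc i)) h \<and>
            (\<forall>\<alpha>\<in>FE. \<alpha> \<inter> \<beta> = {} \<longrightarrow> h \<alpha> = inv\<^bsub>G\<^esub> (g \<alpha>) \<otimes>\<^bsub>G\<^esub> g (\<alpha> \<union> \<beta>))) \<Longrightarrow>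
         poly_map G Gs g"

text \<open>Maps \<open>\<F>\<^sub>\<emptyset> \<rightarrow> G/\<Gamma>\<close>, cosets represented as left cosets \<open>x \<Gamma>\<close>.\<close>
definition poly_map_quot :: "('a, 'b) monoid_scheme \<Rightarrow> (nat \<Rightarrow> 'a set) \<Rightarrow> 'a set \<Rightarrow> (nat set \<Rightarrow> 'a set) \<Rightarrow> bool" where
  "poly_map_quot G Gs \<Gamma> fb \<longleftrightarrow> (\<exists>g. poly_map G Gs g \<and> (\<forall>\<alpha>\<in>FE. fb \<alpha> = g \<alpha> <#\<^bsub>G\<^esub> \<Gamma>))"

text \<open>Cubes in \<open>G^{{0,1}^k}\<close> are functions on subsets \<open>\<omega> \<subseteq> {1..k}\<close>, extended by \<open>\<one>\<close>
  outside that domain.  \<open>gen_cube G k g \<omega>\<close> is \<open>g\<^sup>[\<omega>]\<close>.\<close>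
definition gen_cube :: "('a, 'b) monoid_scheme \<Rightarrow> nat \<Rightarrow> 'a \<Rightarrow> nat set \<Rightarrow> nat set \<Rightarrow> 'a" where
  "gen_cube G k g \<omega> = (\<lambda>\<sigma>. if \<omega> \<subseteq> \<sigma> \<and> \<sigma> \<subseteq> {1..k} then g else \<one>\<^bsub>G\<^esub>)"

inductive_set HK :: "('a, 'b) monoid_scheme \<Rightarrow> nat \<Rightarrow> (nat \<Rightarrow> 'a set) \<Rightarrow> (nat set \<Rightarrow> 'a) set"
  for G k Gs where
  one: "(\<lambda>\<sigma>. \<one>\<^bsub>G\<^esub>) \<in> HK G k Gs"
| gen: "\<omega> \<subseteq> {1..k} \<Longrightarrow> g \<in> Gs (card \<omega>) \<Longrightarrow> gen_cube G k g \<omega> \<in> HK G k Gs"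
| mult: "c \<in> HK G k Gs \<Longrightarrow> c' \<in> HK G k Gs \<Longrightarrow> (\<lambda>\<sigma>. c \<sigma> \<otimes>\<^bsub>G\<^esub> c' \<sigma>) \<in> HK G k Gs"
| inv: "c \<in> HK G k Gs \<Longrightarrow> (\<lambda>\<sigma>. inv\<^bsub>G\<^esub> (c \<sigma>)) \<in> HK G k Gs"

definition in_HK_quot :: "('a, 'b) monoid_scheme \<Rightarrow> nat \<Rightarrow> (nat \<Rightarrow> 'a set) \<Rightarrow> 'a set \<Rightarrow> (nat set \<Rightarrow> 'a set) \<Rightarrow> bool" where
  "in_HK_quot G k Gs \<Gamma> cb \<longleftrightarrow>
     (\<exists>c\<in>HK G k Gs. \<forall>\<omega>. \<omega> \<subseteq> {1..k} \<longrightarrow> cb \<omega> = c \<omega> <#\<^bsub>G\<^esub> \<Gamma>)"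

definition parallelepiped_base :: "nat \<Rightarrow> (nat \<Rightarrow> nat set) \<Rightarrow> bool" where
  "parallelepiped_base k a \<longleftrightarrow> (\<forall>i\<le>k. a i \<in> FE) \<and>
     (\<forall>i\<le>k. \<forall>j\<le>k. i \<noteq> j \<longrightarrow> a i \<inter> a j = {})"

definition parallelepiped_vertex :: "(nat \<Rightarrow> nat set) \<Rightarrow> nat set \<Rightarrow> nat set" where
  "parallelepiped_vertex a \<omega> = a 0 \<union> (\<Union>i\<in>\<omega>. a i)"

end

theory Submission imports Defs begin

definition genI :: "('a,'b) monoid_scheme \<Rightarrow> nat set \<Rightarrow> 'a \<Rightarrow> nat set \<Rightarrow> nat set \<Rightarrow> 'a" where
  "genI G I g \<omega> = (\<lambda>\<sigma>. if \<omega> \<subseteq> \<sigma> \<and> \<sigma> \<subseteq> I then g else \<one>\<^bsub>G\<^esub>)"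

inductive_set HKI :: "('a, 'b) monoid_scheme \<Rightarrow> nat set \<Rightarrow> (nat \<Rightarrow> 'a set) \<Rightarrow> (nat set \<Rightarrow> 'a) set"
  for G I Gs where
  one: "(\<lambda>\<sigma>. \<one>\<^bsub>G\<^esub>) \<in> HKI G I Gs"
| gen: "\<omega> \<subseteq> I \<Longrightarrow> g \<in> Gs (card \<omega>) \<Longrightarrow> genI G I g \<omega> \<in> HKI G I Gs"
| mult: "c \<in> HKI G I Gs \<Longrightarrow> c' \<in> HKI G I Gs \<Longrightarrow> (\<lambda>\<sigma>. c \<sigma> \<otimes>\<^bsub>G\<^esub> c' \<sigma>) \<in> HKI G I Gs"
| inv: "c \<in> HKI G I Gs \<Longrightarrow> (\<lambda>\<sigma>. inv\<^bsub>G\<^esub> (c \<sigma>)) \<in> HKI G I Gs"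

lemma gen_cube_genI: "gen_cube G k g \<omega> = genI G {1..k} g \<omega>"
  by (simp add: gen_cube_def genI_def)

lemma HK_eq_HKI: "HK G k Gs = HKI G {1..k} Gs"
proof safe
  fix c assume "c \<in> HK G k Gs" then show "c \<in> HKI G {1..k} Gs"
  proof induct
    case (gen \<omega> g) then show ?case unfolding gen_cube_genI by (rule HKI.gen)
  qed (auto intro: HKI.intros)
next
  fix c assume "c \<in> HKI G {1..k} Gs" then show "c \<in> HK G k Gs"
  proof induct
    case (gen \<omega> g) then show ?case unfolding gen_cube_genI[symmetric] by (rule HK.gen)
  qed (auto intro: HK.intros)
qed

definition filt :: "('a,'b) monoid_scheme \<Rightarrow> (nat \<Rightarrow> 'a set) \<Rightarrow> bool" where
  "filt G Gs \<longleftrightarrow> (\<forall>i. subgroup (Gs i) G) \<and> (\<forall>i j. i \<le> j \<longrightarrow> Gs j \<subseteq> Gs i) \<and>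
     (\<forall>i. \<forall>x\<in>carrier G. \<forall>y\<in>Gs i. inv\<^bsub>G\<^esub> x \<otimes>\<^bsub>G\<^esub> y \<otimes>\<^bsub>G\<^esub> x \<in> Gs i) \<and>
     (\<forall>i j. \<forall>x\<in>Gs i. \<forall>y\<in>Gs j. inv\<^bsub>G\<^esub> x \<otimes>\<^bsub>G\<^esub> inv\<^bsub>G\<^esub> y \<otimes>\<^bsub>G\<^esub> x \<otimes>\<^bsub>G\<^esub> y \<in> Gs (i + j))"

definition res :: "('a,'b) monoid_scheme \<Rightarrow> nat set \<Rightarrow> (nat set \<Rightarrow> 'a) \<Rightarrow> nat set \<Rightarrow> 'a" where
  "res G J c = (\<lambda>\<sigma>. if \<sigma> \<subseteq> J then c \<sigma> else \<one>\<^bsub>G\<^esub>)"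

definition Dm :: "('a,'b) monoid_scheme \<Rightarrow> nat \<Rightarrow> (nat set \<Rightarrow> 'a) \<Rightarrow> nat set \<Rightarrow> 'a" where
  "Dm G m c = (\<lambda>\<sigma>. if m \<in> \<sigma> then \<one>\<^bsub>G\<^esub> else inv\<^bsub>G\<^esub> (c \<sigma>) \<otimes>\<^bsub>G\<^esub> c (insert m \<sigma>))"

lemma filt_shift: assumes f: "filt G Gs" shows "filt G (\<lambda>i. Gs (Suc i))"
proof -
  note F = f[unfolded filt_def]
  have S: "\<forall>i. subgroup (Gs i) G" using F by (rule conjunct1)
  have M: "\<forall>i j. i \<le> j \<longrightarrow> Gs j \<subseteq> Gs i" using F by (blast dest: conjunct2 conjunct1)
  have N: "\<forall>i. \<forall>x\<in>carrier G. \<forall>y\<in>Gs i. inv\<^bsub>G\<^esub> x \<otimes>\<^bsub>G\<^esub> y \<otimes>\<^bsub>G\<^esub> x \<in> Gs i"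
    using F by (blast dest: conjunct2 conjunct1)
  have A: "\<forall>i j. \<forall>x\<in>Gs i. \<forall>y\<in>Gs j. inv\<^bsub>G\<^esub> x \<otimes>\<^bsub>G\<^esub> inv\<^bsub>G\<^esub> y \<otimes>\<^bsub>G\<^esub> x \<otimes>\<^bsub>G\<^esub> y \<in> Gs (i + j)"
    using F by (blast dest: conjunct2)
  have A': "\<forall>i j. \<forall>x\<in>Gs (Suc i). \<forall>y\<in>Gs (Suc j). inv\<^bsub>G\<^esub> x \<otimes>\<^bsub>G\<^esub> inv\<^bsub>G\<^esub> y \<otimes>\<^bsub>G\<^esub> x \<otimes>\<^bsub>G\<^esub> y \<in> Gs (Suc (i + j))"
  proof (intro allI ballI)
    fix i j x y assume x: "x \<in> Gs (Suc i)" and y: "y \<in> Gs (Suc j)"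
    have "inv\<^bsub>G\<^esub> x \<otimes>\<^bsub>G\<^esub> inv\<^bsub>G\<^esub> y \<otimes>\<^bsub>G\<^esub> x \<otimes>\<^bsub>G\<^esub> y \<in> Gs (Suc i + Suc j)" using A x y by blast
    moreover have "Gs (Suc i + Suc j) \<subseteq> Gs (Suc (i + j))" using M by simp
    ultimately show "inv\<^bsub>G\<^esub> x \<otimes>\<^bsub>G\<^esub> inv\<^bsub>G\<^esub> y \<otimes>\<^bsub>G\<^esub> x \<otimes>\<^bsub>G\<^esub> y \<in> Gs (Suc (i + j))" by blast
  qed
  have M': "\<forall>i j. i \<le> j \<longrightarrow> Gs (Suc j) \<subseteq> Gs (Suc i)" using M by simp
  have S': "\<forall>i. subgroup (Gs (Suc i)) G" using S by simp
  have N': "\<forall>i. \<forall>x\<in>carrier G. \<forall>y\<in>Gs (Suc i). inv\<^bsub>G\<^esub> x \<otimes>\<^bsub>G\<^esub> y \<otimes>\<^bsub>G\<^esub> x \<in> Gs (Suc i)"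
    using N by blast
  show ?thesis unfolding filt_def using S' M' N' A' by (intro conjI)
qed

lemma filt_sub: "filt G Gs \<Longrightarrow> subgroup (Gs i) G"
  unfolding filt_def by (elim conjE) (erule spec)
lemma filt_mono: assumes "filt G Gs" "i \<le> j" shows "Gs j \<subseteq> Gs i"
proof -
  have "\<forall>i j. i \<le> j \<longrightarrow> Gs j \<subseteq> Gs i" using assms(1)[unfolded filt_def] by (blast dest: conjunct2 conjunct1)
  then show ?thesis using assms(2) by blast
qed
lemma filt_normal: assumes "filt G Gs" "x \<in> carrier G" "y \<in> Gs i" shows "inv\<^bsub>G\<^esub> x \<otimes>\<^bsub>G\<^esub> y \<otimes>\<^bsub>G\<^esub> x \<in> Gs i"
proof -
  have "\<forall>i. \<forall>x\<in>carrier G. \<forall>y\<in>Gs i. inv\<^bsub>G\<^esub> x \<otimes>\<^bsub>G\<^esub> y \<otimes>\<^bsub>G\<^esub> x \<in> Gs i" using assms(1)[unfolded filt_def] by (blast dest: conjunct2 conjunct1)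
  then show ?thesis using assms(2,3) by blast
qed
lemma filt_comm: assumes "filt G Gs" "x \<in> Gs i" "y \<in> Gs j" shows "inv\<^bsub>G\<^esub> x \<otimes>\<^bsub>G\<^esub> inv\<^bsub>G\<^esub> y \<otimes>\<^bsub>G\<^esub> x \<otimes>\<^bsub>G\<^esub> y \<in> Gs (i + j)"
proof -
  have "\<forall>i j. \<forall>x\<in>Gs i. \<forall>y\<in>Gs j. inv\<^bsub>G\<^esub> x \<otimes>\<^bsub>G\<^esub> inv\<^bsub>G\<^esub> y \<otimes>\<^bsub>G\<^esub> x \<otimes>\<^bsub>G\<^esub> y \<in> Gs (i + j)" using assms(1)[unfolded filt_def] by (blast dest: conjunct2)
  then show ?thesis using assms(2,3) by blast
qed

context group begin

lemma filt_carrier: "filt G Gs \<Longrightarrow> x \<in> Gs i \<Longrightarrow> x \<in> carrier G"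
  by (rule subgroup.mem_carrier[OF filt_sub])

lemma HKI_Gs0:
  assumes f: "filt G Gs" and c: "c \<in> HKI G I Gs" shows "c \<sigma> \<in> Gs 0"
  using c
proof induct
  case one then show ?case using subgroup.one_closed[OF filt_sub[OF f]] by simp
next
  case (gen \<omega> g)
  have "g \<in> Gs 0" using gen(2) filt_mono[OF f, of 0 "card \<omega>"] by auto
  then show ?case using subgroup.one_closed[OF filt_sub[OF f]] by (simp add: genI_def)
next
  case (mult c c') then show ?case using subgroup.m_closed[OF filt_sub[OF f]] by simp
next
  case (inv c) then show ?case using subgroup.m_inv_closed[OF filt_sub[OF f]] by simp
qed

lemma HKI_carrier: "filt G Gs \<Longrightarrow> c \<in> HKI G I Gs \<Longrightarrow> c \<sigma> \<in> carrier G"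
  by (rule filt_carrier[OF _ HKI_Gs0])

lemma HKI_out: "c \<in> HKI G I Gs \<Longrightarrow> \<not> \<sigma> \<subseteq> I \<Longrightarrow> c \<sigma> = \<one>"
  by (induct rule: HKI.induct) (auto simp: genI_def)


lemma mult_inv_cancel_left [simp]: "x \<in> carrier G \<Longrightarrow> y \<in> carrier G \<Longrightarrow> x \<otimes> (inv x \<otimes> y) = y"
  by (simp add: m_assoc[symmetric])
lemma inv_mult_cancel_left [simp]: "x \<in> carrier G \<Longrightarrow> y \<in> carrier G \<Longrightarrow> inv x \<otimes> (x \<otimes> y) = y"
  by (simp add: m_assoc[symmetric])

lemma res_HKI:
  assumes c: "c \<in> HKI G I Gs" and J: "J \<subseteq> I"
  shows "res G J c \<in> HKI G J Gs"
  using c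
proof induct
  case one
  have "res G J (\<lambda>\<sigma>. \<one>) = (\<lambda>\<sigma>. \<one>)" by (simp add: res_def fun_eq_iff)
  then show ?case by (simp add: HKI.one)
next
  case (gen \<omega> g)
  show ?case
  proof (cases "\<omega> \<subseteq> J")
    case True
    have "res G J (genI G I g \<omega>) = genI G J g \<omega>" using J by (auto simp: res_def genI_def fun_eq_iff)
    then show ?thesis using True gen(2) by (simp add: HKI.gen)
  next
    case False
    have "res G J (genI G I g \<omega>) = (\<lambda>\<sigma>. \<one>)" using False by (auto simp: res_def genI_def fun_eq_iff)
    then show ?thesis by (simp add: HKI.one)
  qed
next
  case (mult c c')
  have "res G J (\<lambda>\<sigma>. c \<sigma> \<otimes> c' \<sigma>) = (\<lambda>\<sigma>. res G J c \<sigma> \<otimes> res G J c' \<sigma>)" by (simp add: res_def fun_eq_iff)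
  then show ?case using HKI.mult[OF mult(2) mult(4)] by simp
next
  case (inv c)
  have "res G J (\<lambda>\<sigma>. inv (c \<sigma>)) = (\<lambda>\<sigma>. inv (res G J c \<sigma>))" by (simp add: res_def fun_eq_iff)
  then show ?case using HKI.inv[OF inv(2)] by simp
qed

lemma lift0_HKI:
  assumes m: "m \<notin> J" and c: "c \<in> HKI G J Gs"
  shows "(\<lambda>\<sigma>. c (\<sigma> - {m})) \<in> HKI G (insert m J) Gs"
  using c
proof induct
  case one then show ?case by (simp add: HKI.one)
next
  case (gen \<omega> g)
  have "(\<lambda>\<sigma>. genI G J g \<omega> (\<sigma> - {m})) = genI G (insert m J) g \<omega>"
    using gen(1) m by (auto simp: genI_def fun_eq_iff)
  moreover have "genI G (insert m J) g \<omega> \<in> HKI G (insert m J) Gs"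
    using gen by (intro HKI.gen) auto
  ultimately show ?case by simp
next
  case (mult c c') then show ?case using HKI.mult[OF mult(2) mult(4)] by simp
next
  case (inv c) then show ?case using HKI.inv[OF inv(2)] by simp
qed

lemma lift1_HKI:
  assumes m: "m \<notin> J" and J: "finite J" and d: "d \<in> HKI G J (\<lambda>i. Gs (Suc i))"
  shows "(\<lambda>\<sigma>. if m \<in> \<sigma> then d (\<sigma> - {m}) else \<one>) \<in> HKI G (insert m J) Gs"
  using d
proof induct
  case one
  have "(\<lambda>\<sigma>::nat set. if m \<in> \<sigma> then \<one> else \<one>) = (\<lambda>\<sigma>. \<one>)" by simp
  then show ?case by (simp add: HKI.one)
next
  case (gen \<omega> g)
  have eq: "(\<lambda>\<sigma>. if m \<in> \<sigma> then genI G J g \<omega> (\<sigma> - {m}) else \<one>) = genI G (insert m J) g (insert m \<omega>)"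
    using gen(1) m by (auto simp: genI_def fun_eq_iff)
  have fin: "finite \<omega>" using gen(1) J finite_subset by blast
  have "m \<notin> \<omega>" using gen(1) m by blast
  then have "card (insert m \<omega>) = Suc (card \<omega>)" using fin by simp
  then have "g \<in> Gs (card (insert m \<omega>))" using gen(2) by simp
  moreover have "insert m \<omega> \<subseteq> insert m J" using gen(1) by auto
  ultimately show ?case unfolding eq by (rule HKI.gen[rotated])
next
  case (mult c c')
  have "(\<lambda>\<sigma>. if m \<in> \<sigma> then c (\<sigma> - {m}) \<otimes> c' (\<sigma> - {m}) else \<one>)
     = (\<lambda>\<sigma>. (if m \<in> \<sigma> then c (\<sigma> - {m}) else \<one>) \<otimes> (if m \<in> \<sigma> then c' (\<sigma> - {m}) else \<one>))"
    by (simp add: fun_eq_iff)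
  then show ?case using HKI.mult[OF mult(2) mult(4)] by simp
next
  case (inv c)
  have "(\<lambda>\<sigma>. if m \<in> \<sigma> then inv (c (\<sigma> - {m})) else \<one>)
     = (\<lambda>\<sigma>. inv (if m \<in> \<sigma> then c (\<sigma> - {m}) else \<one>))"
    by (simp add: fun_eq_iff)
  then show ?case using HKI.inv[OF inv(2)] by simp
qed


lemma genI_carrier: "g \<in> carrier G \<Longrightarrow> genI G J g \<omega> \<sigma> \<in> carrier G"
  by (simp add: genI_def)

lemma conj_gen:
  assumes f: "filt G Gs" and \<omega>: "\<omega> \<subseteq> J" and g: "g \<in> Gs (card \<omega>)" and J: "finite J"
    and b: "b \<in> HKI G J (\<lambda>i. Gs (Suc i))"
  shows "(\<lambda>\<sigma>. inv (genI G J g \<omega> \<sigma>) \<otimes> b \<sigma> \<otimes> genI G J g \<omega> \<sigma>) \<in> HKI G J (\<lambda>i. Gs (Suc i))"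
  using b
proof induct
  have gc: "g \<in> carrier G" using g f by (rule filt_carrier[rotated])
  case one
  have "(\<lambda>\<sigma>. inv (genI G J g \<omega> \<sigma>) \<otimes> \<one> \<otimes> genI G J g \<omega> \<sigma>) = (\<lambda>\<sigma>. \<one>)"
    using gc by (simp add: fun_eq_iff genI_carrier)
  then show ?case by (simp add: HKI.one)
next
  have gc: "g \<in> carrier G" using g f by (rule filt_carrier[rotated])
  case (gen \<eta> h)
  have hc: "h \<in> carrier G" using gen(2) f by (rule filt_carrier[rotated])
  define k where "k = inv h \<otimes> inv g \<otimes> h \<otimes> g"
  have k1: "k \<in> Gs (Suc (card \<eta>) + card \<omega>)" unfolding k_def by (rule filt_comm[OF f gen(2) g])
  have fin: "finite \<eta>" "finite \<omega>" using gen(1) \<omega> J finite_subset by blast+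
  have "Suc (card (\<eta> \<union> \<omega>)) \<le> Suc (card \<eta>) + card \<omega>" using card_Un_le[of \<eta> \<omega>] by simp
  then have k2: "k \<in> Gs (Suc (card (\<eta> \<union> \<omega>)))" using k1 filt_mono[OF f] by blast
  have eq: "(\<lambda>\<sigma>. inv (genI G J g \<omega> \<sigma>) \<otimes> genI G J h \<eta> \<sigma> \<otimes> genI G J g \<omega> \<sigma>)
      = (\<lambda>\<sigma>. genI G J h \<eta> \<sigma> \<otimes> genI G J k (\<eta> \<union> \<omega>) \<sigma>)"
  proof
    fix \<sigma>
    show "inv (genI G J g \<omega> \<sigma>) \<otimes> genI G J h \<eta> \<sigma> \<otimes> genI G J g \<omega> \<sigma> = genI G J h \<eta> \<sigma> \<otimes> genI G J k (\<eta> \<union> \<omega>) \<sigma>"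
      using gc hc by (auto simp: genI_def k_def m_assoc)
  qed
  have "(\<lambda>\<sigma>. genI G J h \<eta> \<sigma> \<otimes> genI G J k (\<eta> \<union> \<omega>) \<sigma>) \<in> HKI G J (\<lambda>i. Gs (Suc i))"
    by (rule HKI.mult; rule HKI.gen) (use gen(1,2) \<omega> k2 in auto)
  then show ?case unfolding eq .
next
  have gc: "g \<in> carrier G" using g f by (rule filt_carrier[rotated])
  case (mult c c')
  have cc: "c \<sigma> \<in> carrier G" "c' \<sigma> \<in> carrier G" for \<sigma>
    using HKI_carrier[OF filt_shift[OF f]] mult(1,3) by blast+
  have "(\<lambda>\<sigma>. inv (genI G J g \<omega> \<sigma>) \<otimes> (c \<sigma> \<otimes> c' \<sigma>) \<otimes> genI G J g \<omega> \<sigma>)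
     = (\<lambda>\<sigma>. (inv (genI G J g \<omega> \<sigma>) \<otimes> c \<sigma> \<otimes> genI G J g \<omega> \<sigma>) \<otimes> (inv (genI G J g \<omega> \<sigma>) \<otimes> c' \<sigma> \<otimes> genI G J g \<omega> \<sigma>))"
    using gc cc by (simp add: fun_eq_iff m_assoc genI_carrier)
  then show ?case using HKI.mult[OF mult(2) mult(4)] by simp
next
  have gc: "g \<in> carrier G" using g f by (rule filt_carrier[rotated])
  case (inv c)
  have cc: "c \<sigma> \<in> carrier G" for \<sigma>
    using HKI_carrier[OF filt_shift[OF f]] inv(1) by blast
  have "(\<lambda>\<sigma>. inv (genI G J g \<omega> \<sigma>) \<otimes> inv (c \<sigma>) \<otimes> genI G J g \<omega> \<sigma>)
     = (\<lambda>\<sigma>. inv (inv (genI G J g \<omega> \<sigma>) \<otimes> c \<sigma> \<otimes> genI G J g \<omega> \<sigma>))"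
    using gc cc by (simp add: fun_eq_iff m_assoc genI_carrier inv_mult_group)
  then show ?case using HKI.inv[OF inv(2)] by simp
qed

lemma conj_all:
  assumes f: "filt G Gs" and J: "finite J" and a: "a \<in> HKI G J Gs"
  shows "\<forall>b \<in> HKI G J (\<lambda>i. Gs (Suc i)). (\<lambda>\<sigma>. inv (a \<sigma>) \<otimes> b \<sigma> \<otimes> a \<sigma>) \<in> HKI G J (\<lambda>i. Gs (Suc i))
     \<and> (\<lambda>\<sigma>. a \<sigma> \<otimes> b \<sigma> \<otimes> inv (a \<sigma>)) \<in> HKI G J (\<lambda>i. Gs (Suc i))"
  using a
proof induct
  case one
  show ?case
  proof
    fix b assume b: "b \<in> HKI G J (\<lambda>i. Gs (Suc i))"
    have cc: "b \<sigma> \<in> carrier G" for \<sigma> using HKI_carrier[OF filt_shift[OF f] b] .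
    have "(\<lambda>\<sigma>. inv \<one> \<otimes> b \<sigma> \<otimes> \<one>) = b" "(\<lambda>\<sigma>. \<one> \<otimes> b \<sigma> \<otimes> inv \<one>) = b" using cc by (simp_all add: fun_eq_iff)
    then show "(\<lambda>\<sigma>. inv \<one> \<otimes> b \<sigma> \<otimes> \<one>) \<in> HKI G J (\<lambda>i. Gs (Suc i)) \<and> (\<lambda>\<sigma>. \<one> \<otimes> b \<sigma> \<otimes> inv \<one>) \<in> HKI G J (\<lambda>i. Gs (Suc i))"
      using b by simp
  qed
next
  case (gen \<omega> g)
  have gc: "g \<in> carrier G" using gen(2) f by (rule filt_carrier[rotated])
  have ig: "inv g \<in> Gs (card \<omega>)" using gen(2) subgroup.m_inv_closed[OF filt_sub[OF f]] by blast
  show ?case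
  proof
    fix b assume b: "b \<in> HKI G J (\<lambda>i. Gs (Suc i))"
    have cc: "b \<sigma> \<in> carrier G" for \<sigma> using HKI_carrier[OF filt_shift[OF f] b] .
    have "(\<lambda>\<sigma>. genI G J g \<omega> \<sigma> \<otimes> b \<sigma> \<otimes> inv (genI G J g \<omega> \<sigma>)) = (\<lambda>\<sigma>. inv (genI G J (inv g) \<omega> \<sigma>) \<otimes> b \<sigma> \<otimes> genI G J (inv g) \<omega> \<sigma>)"
      using gc by (simp add: fun_eq_iff genI_def)
    then show "(\<lambda>\<sigma>. inv (genI G J g \<omega> \<sigma>) \<otimes> b \<sigma> \<otimes> genI G J g \<omega> \<sigma>) \<in> HKI G J (\<lambda>i. Gs (Suc i)) \<and>
        (\<lambda>\<sigma>. genI G J g \<omega> \<sigma> \<otimes> b \<sigma> \<otimes> inv (genI G J g \<omega> \<sigma>)) \<in> HKI G J (\<lambda>i. Gs (Suc i))"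
      using conj_gen[OF f gen(1) gen(2) J b] conj_gen[OF f gen(1) ig J b] by simp
  qed
next
  case (mult a1 a2)
  show ?case
  proof
    fix b assume b: "b \<in> HKI G J (\<lambda>i. Gs (Suc i))"
    have cc: "b \<sigma> \<in> carrier G" "a1 \<sigma> \<in> carrier G" "a2 \<sigma> \<in> carrier G" for \<sigma>
      using HKI_carrier[OF filt_shift[OF f] b] HKI_carrier[OF f mult(1)] HKI_carrier[OF f mult(3)] by auto
    have b1: "(\<lambda>\<sigma>. inv (a1 \<sigma>) \<otimes> b \<sigma> \<otimes> a1 \<sigma>) \<in> HKI G J (\<lambda>i. Gs (Suc i))"
      and b2: "(\<lambda>\<sigma>. a2 \<sigma> \<otimes> b \<sigma> \<otimes> inv (a2 \<sigma>)) \<in> HKI G J (\<lambda>i. Gs (Suc i))" using mult(2,4) b by blast+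
    have e1: "(\<lambda>\<sigma>. inv (a1 \<sigma> \<otimes> a2 \<sigma>) \<otimes> b \<sigma> \<otimes> (a1 \<sigma> \<otimes> a2 \<sigma>)) = (\<lambda>\<sigma>. inv (a2 \<sigma>) \<otimes> (inv (a1 \<sigma>) \<otimes> b \<sigma> \<otimes> a1 \<sigma>) \<otimes> a2 \<sigma>)"
      using cc by (simp add: fun_eq_iff m_assoc inv_mult_group)
    have e2: "(\<lambda>\<sigma>. (a1 \<sigma> \<otimes> a2 \<sigma>) \<otimes> b \<sigma> \<otimes> inv (a1 \<sigma> \<otimes> a2 \<sigma>)) = (\<lambda>\<sigma>. a1 \<sigma> \<otimes> (a2 \<sigma> \<otimes> b \<sigma> \<otimes> inv (a2 \<sigma>)) \<otimes> inv (a1 \<sigma>))"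
      using cc by (simp add: fun_eq_iff m_assoc inv_mult_group)
    show "(\<lambda>\<sigma>. inv (a1 \<sigma> \<otimes> a2 \<sigma>) \<otimes> b \<sigma> \<otimes> (a1 \<sigma> \<otimes> a2 \<sigma>)) \<in> HKI G J (\<lambda>i. Gs (Suc i)) \<and>
        (\<lambda>\<sigma>. (a1 \<sigma> \<otimes> a2 \<sigma>) \<otimes> b \<sigma> \<otimes> inv (a1 \<sigma> \<otimes> a2 \<sigma>)) \<in> HKI G J (\<lambda>i. Gs (Suc i))"
      unfolding e1 e2 using conjunct1[OF bspec[OF mult(4) b1]] conjunct2[OF bspec[OF mult(2) b2]] by simp
  qed
next
  case (inv a)
  show ?case
  proof
    fix b assume b: "b \<in> HKI G J (\<lambda>i. Gs (Suc i))"
    have cc: "a \<sigma> \<in> carrier G" for \<sigma> using HKI_carrier[OF f inv(1)] .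
    have "(\<lambda>\<sigma>. inv (inv (a \<sigma>)) \<otimes> b \<sigma> \<otimes> inv (a \<sigma>)) = (\<lambda>\<sigma>. a \<sigma> \<otimes> b \<sigma> \<otimes> inv (a \<sigma>))"
      "(\<lambda>\<sigma>. inv (a \<sigma>) \<otimes> b \<sigma> \<otimes> inv (inv (a \<sigma>))) = (\<lambda>\<sigma>. inv (a \<sigma>) \<otimes> b \<sigma> \<otimes> a \<sigma>)"
      using cc by (simp_all add: fun_eq_iff)
    then show "(\<lambda>\<sigma>. inv (inv (a \<sigma>)) \<otimes> b \<sigma> \<otimes> inv (a \<sigma>)) \<in> HKI G J (\<lambda>i. Gs (Suc i)) \<and>
        (\<lambda>\<sigma>. inv (a \<sigma>) \<otimes> b \<sigma> \<otimes> inv (inv (a \<sigma>))) \<in> HKI G J (\<lambda>i. Gs (Suc i))"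
      using inv(2) b by simp
  qed
qed


lemma Dm_HKI:
  assumes f: "filt G Gs" and m: "m \<notin> J" and J: "finite J" and c: "c \<in> HKI G (insert m J) Gs"
  shows "Dm G m c \<in> HKI G J (\<lambda>i. Gs (Suc i))"
  using c
proof induct
  case one
  have "Dm G m (\<lambda>\<sigma>. \<one>) = (\<lambda>\<sigma>. \<one>)" by (simp add: Dm_def fun_eq_iff)
  then show ?case by (simp add: HKI.one)
next
  case (gen \<omega> g)
  have gc: "g \<in> carrier G" using gen(2) f by (rule filt_carrier[rotated])
  show ?case
  proof (cases "m \<in> \<omega>")
    case True
    have eq: "Dm G m (genI G (insert m J) g \<omega>) = genI G J g (\<omega> - {m})"
    proof
      fix \<sigma> show "Dm G m (genI G (insert m J) g \<omega>) \<sigma> = genI G J g (\<omega> - {m}) \<sigma>"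
        using True m gc by (auto simp: Dm_def genI_def)
    qed
    have fin: "finite \<omega>" using gen(1) J finite_subset by auto
    have "card \<omega> = Suc (card (\<omega> - {m}))" using fin True by (metis card_Suc_Diff1)
    then have "g \<in> Gs (Suc (card (\<omega> - {m})))" using gen(2) by simp
    moreover have "\<omega> - {m} \<subseteq> J" using gen(1) by auto
    ultimately show ?thesis unfolding eq by (rule HKI.gen[rotated])
  next
    case False
    have eq: "Dm G m (genI G (insert m J) g \<omega>) = (\<lambda>\<sigma>. \<one>)"
    proof
      fix \<sigma> show "Dm G m (genI G (insert m J) g \<omega>) \<sigma> = \<one>"
        using False m gc by (auto simp: Dm_def genI_def)
    qed
    show ?thesis unfolding eq by (rule HKI.one)
  qed
next
  case (mult c c')
  let ?a = "res G J c'"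
  have a: "?a \<in> HKI G J Gs" using res_HKI[OF mult(3)] by auto
  have cc: "c \<sigma> \<in> carrier G" "c' \<sigma> \<in> carrier G" for \<sigma> using HKI_carrier[OF f] mult(1,3) by auto
  have eq: "Dm G m (\<lambda>\<sigma>. c \<sigma> \<otimes> c' \<sigma>) = (\<lambda>\<sigma>. (inv (?a \<sigma>) \<otimes> Dm G m c \<sigma> \<otimes> ?a \<sigma>) \<otimes> Dm G m c' \<sigma>)"
  proof
    fix \<sigma>
    show "Dm G m (\<lambda>\<sigma>. c \<sigma> \<otimes> c' \<sigma>) \<sigma> = (inv (?a \<sigma>) \<otimes> Dm G m c \<sigma> \<otimes> ?a \<sigma>) \<otimes> Dm G m c' \<sigma>"
    proof (cases "m \<in> \<sigma>")
      case True then show ?thesis using cc by (simp add: Dm_def res_def)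
    next
      case False
      show ?thesis
      proof (cases "\<sigma> \<subseteq> J")
        case True then show ?thesis using cc False by (simp add: Dm_def res_def m_assoc inv_mult_group)
      next
        case F2: False
        have "\<not> \<sigma> \<subseteq> insert m J" "\<not> insert m \<sigma> \<subseteq> insert m J" using F2 False by auto
        then have "c \<sigma> = \<one>" "c' \<sigma> = \<one>" "c (insert m \<sigma>) = \<one>" "c' (insert m \<sigma>) = \<one>"
          using HKI_out mult(1,3) by blast+
        then show ?thesis using False F2 by (simp add: Dm_def res_def)
      qed
    qed
  qed
  have "(\<lambda>\<sigma>. inv (?a \<sigma>) \<otimes> Dm G m c \<sigma> \<otimes> ?a \<sigma>) \<in> HKI G J (\<lambda>i. Gs (Suc i))"
    using conjunct1[OF bspec[OF conj_all[OF f J a] mult(2)]] .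
  then show ?case unfolding eq using mult(4) by (rule HKI.mult)
next
  case (inv c)
  let ?a = "res G J c"
  have a: "?a \<in> HKI G J Gs" using res_HKI[OF inv(1)] by auto
  have cc: "c \<sigma> \<in> carrier G" for \<sigma> using HKI_carrier[OF f] inv(1) by auto
  have eq: "Dm G m (\<lambda>\<sigma>. inv (c \<sigma>)) = (\<lambda>\<sigma>. ?a \<sigma> \<otimes> inv (Dm G m c \<sigma>) \<otimes> inv (?a \<sigma>))"
  proof
    fix \<sigma>
    show "Dm G m (\<lambda>\<sigma>. inv (c \<sigma>)) \<sigma> = ?a \<sigma> \<otimes> inv (Dm G m c \<sigma>) \<otimes> inv (?a \<sigma>)"
    proof (cases "m \<in> \<sigma>")
      case True then show ?thesis using cc by (simp add: Dm_def res_def)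
    next
      case False
      show ?thesis
      proof (cases "\<sigma> \<subseteq> J")
        case True then show ?thesis using cc False by (simp add: Dm_def res_def m_assoc inv_mult_group)
      next
        case F2: False
        have "\<not> \<sigma> \<subseteq> insert m J" "\<not> insert m \<sigma> \<subseteq> insert m J" using F2 False by auto
        then have "c \<sigma> = \<one>" "c (insert m \<sigma>) = \<one>"
          using HKI_out inv(1) by blast+
        then show ?thesis using False F2 by (simp add: Dm_def res_def)
      qed
    qed
  qed
  show ?case unfolding eq using conjunct2[OF bspec[OF conj_all[OF f J a] HKI.inv[OF inv(2)]]] .
qed


lemma gamma_lemma:
  assumes "finite I" "filt G Gs" "subgroup \<Gamma> G" "d \<in> HKI G I Gs" "\<forall>\<beta>. \<beta> \<subset> I \<longrightarrow> d \<beta> \<in> \<Gamma>"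
  shows "\<exists>n\<in>Gs (card I). \<exists>\<gamma>\<in>\<Gamma>. d I = n \<otimes> \<gamma>"
  using assms
proof (induct I arbitrary: Gs d rule: finite_induct)
  case empty
  have "d {} \<in> Gs 0" using HKI_Gs0[OF empty(1,3)] .
  moreover have "d {} = d {} \<otimes> \<one>" using HKI_carrier[OF empty(1,3)] by simp
  ultimately show ?case using subgroup.one_closed[OF empty(2)] by auto
next
  case (insert m J)
  note f = insert(4) and \<Gamma> = insert(5) and d = insert(6) and low = insert(7)
  have dc: "d \<sigma> \<in> carrier G" for \<sigma> using HKI_carrier[OF f d] .
  let ?D = "Dm G m d"
  have D: "?D \<in> HKI G J (\<lambda>i. Gs (Suc i))" using Dm_HKI[OF f insert(2,1) d] .
  have Dlow: "\<forall>\<beta>. \<beta> \<subset> J \<longrightarrow> ?D \<beta> \<in> \<Gamma>"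
  proof (intro allI impI)
    fix \<beta> assume b: "\<beta> \<subset> J"
    have "m \<notin> \<beta>" using b insert(2) by auto
    moreover have "\<beta> \<subset> insert m J" "insert m \<beta> \<subset> insert m J" using b insert(2) by auto
    ultimately show "?D \<beta> \<in> \<Gamma>" using low subgroup.m_closed[OF \<Gamma>] subgroup.m_inv_closed[OF \<Gamma>]
      by (simp add: Dm_def)
  qed
  obtain n \<gamma> where n: "n \<in> Gs (Suc (card J))" and \<gamma>: "\<gamma> \<in> \<Gamma>" and e: "?D J = n \<otimes> \<gamma>"
    using insert(3)[OF filt_shift[OF f] \<Gamma> D Dlow] by auto
  have nc: "n \<in> carrier G" using filt_carrier[OF filt_shift[OF f] n] by simp
  have gc: "\<gamma> \<in> carrier G" using \<gamma> subgroup.mem_carrier[OF \<Gamma>] by blast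
  have dJ: "d J \<in> \<Gamma>" using low insert(2) by auto
  have "d (insert m J) = d J \<otimes> ?D J" using dc insert(2) by (simp add: Dm_def)
  also have "\<dots> = (d J \<otimes> n \<otimes> inv (d J)) \<otimes> (d J \<otimes> \<gamma>)" using e dc nc gc by (simp add: m_assoc)
  finally have eq: "d (insert m J) = (d J \<otimes> n \<otimes> inv (d J)) \<otimes> (d J \<otimes> \<gamma>)" .
  have "inv (inv (d J)) \<otimes> n \<otimes> inv (d J) \<in> Gs (Suc (card J))"
    by (rule filt_normal[OF f _ n]) (use dc in simp)
  then have "d J \<otimes> n \<otimes> inv (d J) \<in> Gs (card (insert m J))" using dc insert(1,2) by simp
  moreover have "d J \<otimes> \<gamma> \<in> \<Gamma>" using dJ \<gamma> subgroup.m_closed[OF \<Gamma>] by blast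
  ultimately show ?case using eq by blast
qed

lemma corner:
  assumes "finite I" "filt G Gs" "\<forall>\<sigma>. \<sigma> \<subset> I \<longrightarrow> x \<sigma> \<in> carrier G"
    "\<forall>i\<in>I. res G (I - {i}) x \<in> HKI G (I - {i}) Gs"
  shows "\<exists>t\<in>carrier G. (\<lambda>\<sigma>. if \<sigma> = I then t else res G I x \<sigma>) \<in> HKI G I Gs"
  using assms
proof (induct I arbitrary: Gs x rule: finite_induct)
  case empty
  have "(\<lambda>\<sigma>. if \<sigma> = {} then \<one> else res G {} x \<sigma>) = (\<lambda>\<sigma>. \<one>)" by (auto simp: res_def fun_eq_iff)
  then show ?case using HKI.one[of G "{}" Gs] one_closed by (intro bexI[of _ \<one>]) simp_all
next
  case (insert m J)
  note f = insert(4) and xc = insert(5) and fac = insert(6)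
  have mJ: "m \<notin> J" by fact
  have IJ: "insert m J - {m} = J" using mJ by auto
  have c0: "res G J x \<in> HKI G J Gs" using fac IJ by force
  define d where "d = (\<lambda>\<sigma>. if \<sigma> \<subseteq> J then inv (x \<sigma>) \<otimes> x (insert m \<sigma>) else \<one>)"
  have dcar: "\<forall>\<sigma>. \<sigma> \<subset> J \<longrightarrow> d \<sigma> \<in> carrier G"
  proof (intro allI impI)
    fix \<sigma> assume s: "\<sigma> \<subset> J"
    then have "\<sigma> \<subset> insert m J" "insert m \<sigma> \<subset> insert m J" using mJ by auto
    then show "d \<sigma> \<in> carrier G" using xc s by (auto simp: d_def)
  qed
  have dfac: "\<forall>i\<in>J. res G (J - {i}) d \<in> HKI G (J - {i}) (\<lambda>i. Gs (Suc i))"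
  proof
    fix i assume i: "i \<in> J"
    have im: "i \<noteq> m" using i mJ by auto
    have ins: "insert m (J - {i}) = insert m J - {i}" using im by auto
    have r: "res G (insert m (J - {i})) x \<in> HKI G (insert m (J - {i})) Gs" using fac i ins by auto
    have D: "Dm G m (res G (insert m (J - {i})) x) \<in> HKI G (J - {i}) (\<lambda>i. Gs (Suc i))"
      by (rule Dm_HKI[OF f _ _ r]) (use mJ insert(1) in auto)
    have "res G (J - {i}) d = Dm G m (res G (insert m (J - {i})) x)"
    proof
      fix \<sigma>
      show "res G (J - {i}) d \<sigma> = Dm G m (res G (insert m (J - {i})) x) \<sigma>"
      proof (cases "m \<in> \<sigma>")
        case True then show ?thesis using mJ by (auto simp: res_def Dm_def d_def)
      next
        case False
        show ?thesis
        proof (cases "\<sigma> \<subseteq> J - {i}")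
          case True then show ?thesis using False by (auto simp: res_def Dm_def d_def)
        next
          case F2: False
          have "\<not> \<sigma> \<subseteq> insert m (J - {i})" "\<not> insert m \<sigma> \<subseteq> insert m (J - {i})" using F2 False by auto
          then show ?thesis using F2 False by (simp add: res_def Dm_def d_def)
        qed
      qed
    qed
    then show "res G (J - {i}) d \<in> HKI G (J - {i}) (\<lambda>i. Gs (Suc i))" using D by simp
  qed
  obtain t' where t': "t' \<in> carrier G" and dc: "(\<lambda>\<sigma>. if \<sigma> = J then t' else res G J d \<sigma>) \<in> HKI G J (\<lambda>i. Gs (Suc i))"
    using insert(3)[OF filt_shift[OF f] dcar dfac] by blast
  have xJ: "x J \<in> carrier G" using xc mJ by auto
  let ?dc = "\<lambda>\<sigma>. if \<sigma> = J then t' else res G J d \<sigma>"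
  have P: "(\<lambda>\<sigma>. res G J x (\<sigma> - {m}) \<otimes> (if m \<in> \<sigma> then ?dc (\<sigma> - {m}) else \<one>)) \<in> HKI G (insert m J) Gs"
    by (rule HKI.mult[OF lift0_HKI[OF mJ c0] lift1_HKI[OF mJ insert(1) dc]])
  have eq: "(\<lambda>\<sigma>. res G J x (\<sigma> - {m}) \<otimes> (if m \<in> \<sigma> then ?dc (\<sigma> - {m}) else \<one>))
     = (\<lambda>\<sigma>. if \<sigma> = insert m J then x J \<otimes> t' else res G (insert m J) x \<sigma>)"
  proof
    fix \<sigma>
    show "res G J x (\<sigma> - {m}) \<otimes> (if m \<in> \<sigma> then ?dc (\<sigma> - {m}) else \<one>)
       = (if \<sigma> = insert m J then x J \<otimes> t' else res G (insert m J) x \<sigma>)"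
    proof (cases "\<sigma> = insert m J")
      case True
      then have "\<sigma> - {m} = J" using mJ by auto
      then show ?thesis using True by (simp add: res_def)
    next
      case ne: False
      show ?thesis
      proof (cases "\<sigma> \<subseteq> insert m J")
        case sub: True
        then have ps: "\<sigma> \<subset> insert m J" using ne by auto
        then have xs: "x \<sigma> \<in> carrier G" using xc by blast
        show ?thesis
        proof (cases "m \<in> \<sigma>")
          case True
          have s1: "\<sigma> - {m} \<subseteq> J" "\<sigma> - {m} \<noteq> J" using sub ne True by auto
          have s2: "\<sigma> - {m} \<subset> insert m J" using s1 mJ by auto
          have xs2: "x (\<sigma> - {m}) \<in> carrier G" using xc s2 by blast
          have ins: "insert m (\<sigma> - {m}) = \<sigma>" using True by auto
          show ?thesis using True ne sub s1 xs xs2 ins by (simp add: res_def d_def)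
        next
          case False
          have "\<sigma> - {m} = \<sigma>" "\<sigma> \<subseteq> J" using False sub by auto
          then show ?thesis using False ne sub xs by (simp add: res_def)
        qed
      next
        case nsub: False
        have "\<not> \<sigma> - {m} \<subseteq> J" "\<sigma> - {m} \<noteq> J" using nsub by auto
        then show ?thesis using nsub ne by (simp add: res_def)
      qed
    qed
  qed
  show ?case using P t' xJ unfolding eq by blast
qed


lemma pullback:
  assumes f: "filt G Gs" and I: "finite I" and c: "c \<in> HKI G I Gs" and a0: "a0 \<subseteq> I"
    and AI: "\<forall>j\<in>J. A j \<subseteq> I" and A0: "\<forall>j\<in>J. a0 \<inter> A j = {}"
    and disj: "\<forall>j\<in>J. \<forall>j'\<in>J. j \<noteq> j' \<longrightarrow> A j \<inter> A j' = {}"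
  shows "(\<lambda>\<omega>. if \<omega> \<subseteq> J then c (a0 \<union> \<Union>(A ` \<omega>)) else \<one>) \<in> HKI G J Gs"
  using c
proof induct
  case one
  have "(\<lambda>\<omega>::nat set. if \<omega> \<subseteq> J then \<one> else \<one>) = (\<lambda>\<omega>. \<one>)" by simp
  then show ?case by (simp add: HKI.one)
next
  case (gen \<eta> g)
  show ?case
  proof (cases "\<eta> \<subseteq> a0 \<union> \<Union>(A ` J)")
    case True
    define \<eta>' where "\<eta>' = {j\<in>J. A j \<inter> \<eta> \<noteq> {}}"
    have key: "\<eta> \<subseteq> a0 \<union> \<Union>(A ` \<omega>) \<longleftrightarrow> \<eta>' \<subseteq> \<omega>" if w: "\<omega> \<subseteq> J" for \<omega>
    proof
      assume h: "\<eta> \<subseteq> a0 \<union> \<Union>(A ` \<omega>)"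
      show "\<eta>' \<subseteq> \<omega>"
      proof
        fix j assume "j \<in> \<eta>'"
        then obtain y where j: "j \<in> J" and y: "y \<in> A j" "y \<in> \<eta>" unfolding \<eta>'_def by blast
        then have "y \<notin> a0" using A0 by blast
        then obtain j' where j': "j' \<in> \<omega>" "y \<in> A j'" using h y by blast
        then have "j = j'" using disj j w y by blast
        then show "j \<in> \<omega>" using j' by simp
      qed
    next
      assume h: "\<eta>' \<subseteq> \<omega>"
      show "\<eta> \<subseteq> a0 \<union> \<Union>(A ` \<omega>)"
      proof
        fix y assume y: "y \<in> \<eta>"
        show "y \<in> a0 \<union> \<Union>(A ` \<omega>)"
        proof (cases "y \<in> a0")
          case False
          then obtain j where "j \<in> J" "y \<in> A j" using True y by blast
          then have "j \<in> \<eta>'" using y unfolding \<eta>'_def by blast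
          then show ?thesis using h \<open>y \<in> A j\<close> by blast
        qed simp
      qed
    qed
    have eq: "(\<lambda>\<omega>. if \<omega> \<subseteq> J then genI G I g \<eta> (a0 \<union> \<Union>(A ` \<omega>)) else \<one>) = genI G J g \<eta>'"
    proof
      fix \<omega>
      show "(if \<omega> \<subseteq> J then genI G I g \<eta> (a0 \<union> \<Union>(A ` \<omega>)) else \<one>) = genI G J g \<eta>' \<omega>"
      proof (cases "\<omega> \<subseteq> J")
        case True
        have "a0 \<union> \<Union>(A ` \<omega>) \<subseteq> I" using a0 AI True by blast
        then show ?thesis using True key[OF True] by (simp add: genI_def)
      qed (simp add: genI_def)
    qed
    define F where "F = (\<lambda>y. SOME j. j \<in> J \<and> y \<in> A j)"
    have "\<eta>' \<subseteq> F ` \<eta>"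
    proof
      fix j assume "j \<in> \<eta>'"
      then obtain y where j: "j \<in> J" and y: "y \<in> A j" "y \<in> \<eta>" unfolding \<eta>'_def by blast
      have "F y \<in> J \<and> y \<in> A (F y)" unfolding F_def by (rule someI[of _ j]) (use j y in blast)
      then have "F y = j" using disj j y by blast
      then show "j \<in> F ` \<eta>" using y by blast
    qed
    moreover have fin: "finite \<eta>" using gen(1) I finite_subset by blast
    ultimately have "card \<eta>' \<le> card \<eta>" by (meson card_image_le card_mono finite_imageI le_trans)
    then have "g \<in> Gs (card \<eta>')" using gen(2) filt_mono[OF f] by blast
    moreover have "\<eta>' \<subseteq> J" unfolding \<eta>'_def by blast
    ultimately show ?thesis unfolding eq by (rule HKI.gen[rotated])
  next
    case False
    have eq: "(\<lambda>\<omega>. if \<omega> \<subseteq> J then genI G I g \<eta> (a0 \<union> \<Union>(A ` \<omega>)) else \<one>) = (\<lambda>\<omega>. \<one>)"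
    proof
      fix \<omega>
      show "(if \<omega> \<subseteq> J then genI G I g \<eta> (a0 \<union> \<Union>(A ` \<omega>)) else \<one>) = \<one>"
      proof (cases "\<omega> \<subseteq> J")
        case True
        have "\<not> \<eta> \<subseteq> a0 \<union> \<Union>(A ` \<omega>)" using False True by blast
        then show ?thesis by (simp add: genI_def)
      qed simp
    qed
    show ?thesis unfolding eq by (rule HKI.one)
  qed
next
  case (mult c c')
  have "(\<lambda>\<omega>. if \<omega> \<subseteq> J then c (a0 \<union> \<Union>(A ` \<omega>)) \<otimes> c' (a0 \<union> \<Union>(A ` \<omega>)) else \<one>)
     = (\<lambda>\<omega>. (if \<omega> \<subseteq> J then c (a0 \<union> \<Union>(A ` \<omega>)) else \<one>) \<otimes> (if \<omega> \<subseteq> J then c' (a0 \<union> \<Union>(A ` \<omega>)) else \<one>))"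
    by (simp add: fun_eq_iff)
  then show ?case using HKI.mult[OF mult(2) mult(4)] by simp
next
  case (inv c)
  have "(\<lambda>\<omega>. if \<omega> \<subseteq> J then inv (c (a0 \<union> \<Union>(A ` \<omega>))) else \<one>)
     = (\<lambda>\<omega>. inv (if \<omega> \<subseteq> J then c (a0 \<union> \<Union>(A ` \<omega>)) else \<one>))"
    by (simp add: fun_eq_iff)
  then show ?case using HKI.inv[OF inv(2)] by simp
qed


lemma FE_subset: "\<alpha> \<in> FE \<Longrightarrow> \<sigma> \<subseteq> \<alpha> \<Longrightarrow> \<sigma> \<in> FE"
  unfolding FE_def using finite_subset by blast

lemma poly_cubes:
  assumes "poly_map G Gs g"
  shows "filt G Gs \<longrightarrow> (\<forall>\<alpha>\<in>FE. res G \<alpha> g \<in> HKI G \<alpha> Gs)"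
  using assms
proof (induct rule: poly_map.induct)
  case (triv Gs g)
  show ?case
  proof (intro impI ballI)
    fix \<alpha> assume a: "\<alpha> \<in> FE"
    have "res G \<alpha> g = (\<lambda>\<sigma>. \<one>)" using triv(2) FE_subset[OF a] by (auto simp: res_def fun_eq_iff)
    then show "res G \<alpha> g \<in> HKI G \<alpha> Gs" by (simp add: HKI.one)
  qed
next
  case (step g Gs)
  show ?case
  proof (intro impI)
    assume f: "filt G Gs"
    have gc: "g \<alpha> \<in> carrier G" if "\<alpha> \<in> FE" for \<alpha> using step(1) that filt_carrier[OF f] by blast
    have "finite \<alpha> \<Longrightarrow> 0 \<notin> \<alpha> \<Longrightarrow> res G \<alpha> g \<in> HKI G \<alpha> Gs" for \<alpha>
    proof (induct \<alpha> rule: finite_induct)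
      case empty
      have "res G {} g = genI G {} (g {}) {}" by (auto simp: res_def genI_def fun_eq_iff)
      moreover have "g {} \<in> Gs (card {})" using step(1) by (simp add: FE_def)
      ultimately show ?case by (simp add: HKI.gen)
    next
      case (insert m J)
      have JFE: "J \<in> FE" "{m} \<in> FE" using insert by (auto simp: FE_def)
      obtain h where hp: "poly_map G (\<lambda>i. Gs (Suc i)) h \<and> (filt G (\<lambda>i. Gs (Suc i)) \<longrightarrow> (\<forall>\<alpha>\<in>FE. res G \<alpha> h \<in> HKI G \<alpha> (\<lambda>i. Gs (Suc i))))"
        and hd: "\<forall>\<alpha>\<in>FE. \<alpha> \<inter> {m} = {} \<longrightarrow> h \<alpha> = inv (g \<alpha>) \<otimes> g (\<alpha> \<union> {m})"
        using step(2) JFE(2) by blast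
      have rh: "res G J h \<in> HKI G J (\<lambda>i. Gs (Suc i))" using hp filt_shift[OF f] JFE(1) by blast
      have rg: "res G J g \<in> HKI G J Gs" using insert by simp
      have P: "(\<lambda>\<sigma>. res G J g (\<sigma> - {m}) \<otimes> (if m \<in> \<sigma> then res G J h (\<sigma> - {m}) else \<one>)) \<in> HKI G (insert m J) Gs"
        by (rule HKI.mult[OF lift0_HKI[OF insert(2) rg] lift1_HKI[OF insert(2,1) rh]])
      have eq: "res G (insert m J) g = (\<lambda>\<sigma>. res G J g (\<sigma> - {m}) \<otimes> (if m \<in> \<sigma> then res G J h (\<sigma> - {m}) else \<one>))"
      proof
        fix \<sigma>
        show "res G (insert m J) g \<sigma> = res G J g (\<sigma> - {m}) \<otimes> (if m \<in> \<sigma> then res G J h (\<sigma> - {m}) else \<one>)"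
        proof (cases "\<sigma> \<subseteq> insert m J")
          case True
          show ?thesis
          proof (cases "m \<in> \<sigma>")
            case mT: True
            have s: "\<sigma> - {m} \<subseteq> J" using True by auto
            have sF: "\<sigma> - {m} \<in> FE" using FE_subset[OF JFE(1) s] .
            have sF2: "\<sigma> \<in> FE" using FE_subset[OF _ True] insert(1,4) by (auto simp: FE_def)
            have "h (\<sigma> - {m}) = inv (g (\<sigma> - {m})) \<otimes> g (\<sigma> - {m} \<union> {m})" using hd sF by blast
            moreover have "\<sigma> - {m} \<union> {m} = \<sigma>" using mT by auto
            ultimately show ?thesis using True mT s gc[OF sF] gc[OF sF2] by (simp add: res_def)
          next
            case mF: False
            have s: "\<sigma> \<subseteq> J" using True mF by auto
            then show ?thesis using mF True gc[OF FE_subset[OF JFE(1) s]] by (simp add: res_def)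
          qed
        next
          case False
          then have "\<not> \<sigma> - {m} \<subseteq> J" by auto
          then show ?thesis using False by (simp add: res_def)
        qed
      qed
      show ?case unfolding eq by (rule P)
    qed
    then show "\<forall>\<alpha>\<in>FE. res G \<alpha> g \<in> HKI G \<alpha> Gs" by (auto simp: FE_def)
  qed
qed

lemma cubes_poly:
  assumes "filt G Gs" "Gs N = {\<one>}" "\<forall>\<alpha>\<in>FE. res G \<alpha> g \<in> HKI G \<alpha> Gs"
  shows "poly_map G Gs g"
  using assms
proof (induct N arbitrary: Gs g)
  case 0
  have "g \<alpha> = \<one>" if a: "\<alpha> \<in> FE" for \<alpha>
  proof -
    have "res G \<alpha> g \<alpha> \<in> Gs 0" using HKI_Gs0[OF 0(1)] 0(3) a by blast
    then show ?thesis using 0(2) by (simp add: res_def)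
  qed
  then show ?case using 0(2) by (intro poly_map.triv) auto
next
  case (Suc N)
  note f = Suc(2) and cub = Suc(4)
  have g0: "g \<alpha> \<in> Gs 0" if a: "\<alpha> \<in> FE" for \<alpha>
  proof -
    have "res G \<alpha> g \<alpha> \<in> Gs 0" using HKI_Gs0[OF f] cub a by blast
    then show ?thesis by (simp add: res_def)
  qed
  show ?case
  proof (rule poly_map.step)
    show "\<forall>\<alpha>\<in>FE. g \<alpha> \<in> Gs 0" using g0 by blast
    show "\<forall>\<beta>\<in>FE. \<exists>h. poly_map G (\<lambda>i. Gs (Suc i)) h \<and>
            (\<forall>\<alpha>\<in>FE. \<alpha> \<inter> \<beta> = {} \<longrightarrow> h \<alpha> = inv (g \<alpha>) \<otimes> g (\<alpha> \<union> \<beta>))"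
    proof
      fix \<beta> assume b: "\<beta> \<in> FE"
      define h where "h = (\<lambda>\<alpha>. inv (g (\<alpha> - \<beta>)) \<otimes> g (\<alpha> \<union> \<beta>))"
      have hcub: "\<forall>\<alpha>\<in>FE. res G \<alpha> h \<in> HKI G \<alpha> (\<lambda>i. Gs (Suc i))"
      proof
        fix \<alpha> assume a: "\<alpha> \<in> FE"
        have fin: "finite (\<alpha> \<union> \<beta>)" using a b by (auto simp: FE_def)
        obtain m where m: "m \<notin> \<alpha> \<union> \<beta>" using ex_new_if_finite[OF infinite_UNIV_nat fin] by blast
        let ?I = "\<alpha> \<union> \<beta>"
        have IFE: "?I \<in> FE" using a b by (auto simp: FE_def)
        have c: "res G ?I g \<in> HKI G ?I Gs" using cub IFE by blast
        define A where "A = (\<lambda>j. if j = m then \<beta> else {j} - \<beta>)"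
        have P: "(\<lambda>\<omega>. if \<omega> \<subseteq> insert m \<alpha> then res G ?I g ({} \<union> \<Union>(A ` \<omega>)) else \<one>) \<in> HKI G (insert m \<alpha>) Gs"
          by (rule pullback[OF f fin c]) (auto simp: A_def)
        let ?P = "\<lambda>\<omega>. if \<omega> \<subseteq> insert m \<alpha> then res G ?I g ({} \<union> \<Union>(A ` \<omega>)) else \<one>"
        have ma: "m \<notin> \<alpha>" using m by blast
        have fa: "finite \<alpha>" using a by (simp add: FE_def)
        have D: "Dm G m ?P \<in> HKI G \<alpha> (\<lambda>i. Gs (Suc i))" by (rule Dm_HKI[OF f ma fa P])
        have eq: "res G \<alpha> h = Dm G m ?P"
        proof
          fix \<sigma>
          show "res G \<alpha> h \<sigma> = Dm G m ?P \<sigma>"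
          proof (cases "m \<in> \<sigma>")
            case True
            then have "\<not> \<sigma> \<subseteq> \<alpha>" using ma by blast
            then show ?thesis using True by (simp add: res_def Dm_def)
          next
            case False
            show ?thesis
            proof (cases "\<sigma> \<subseteq> \<alpha>")
              case True
              have u1: "\<Union>(A ` \<sigma>) = \<sigma> - \<beta>" using False by (auto simp: A_def split: if_splits)
              have u2: "\<Union>(A ` insert m \<sigma>) = \<sigma> \<union> \<beta>" using u1 by (auto simp: A_def)
              have "\<sigma> - \<beta> \<subseteq> ?I" "\<sigma> \<union> \<beta> \<subseteq> ?I" "insert m \<sigma> \<subseteq> insert m \<alpha>" using True by auto
              then show ?thesis using True False u1 u2 by (simp add: res_def Dm_def h_def)
            next
              case F2: False
              have "\<not> \<sigma> \<subseteq> insert m \<alpha>" "\<not> insert m \<sigma> \<subseteq> insert m \<alpha>" using F2 False by auto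
              then show ?thesis using F2 False by (simp add: res_def Dm_def)
            qed
          qed
        qed
        show "res G \<alpha> h \<in> HKI G \<alpha> (\<lambda>i. Gs (Suc i))" unfolding eq by (rule D)
      qed
      have "poly_map G (\<lambda>i. Gs (Suc i)) h"
        by (rule Suc(1)[OF filt_shift[OF f] _ hcub]) (use Suc(3) in simp)
      moreover have "\<forall>\<alpha>\<in>FE. \<alpha> \<inter> \<beta> = {} \<longrightarrow> h \<alpha> = inv (g \<alpha>) \<otimes> g (\<alpha> \<union> \<beta>)"
        by (auto simp: h_def Diff_triv)
      ultimately show "\<exists>h. poly_map G (\<lambda>i. Gs (Suc i)) h \<and>
            (\<forall>\<alpha>\<in>FE. \<alpha> \<inter> \<beta> = {} \<longrightarrow> h \<alpha> = inv (g \<alpha>) \<otimes> g (\<alpha> \<union> \<beta>))" by blast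
    qed
  qed
qed


lemma lcos_eq_imp:
  assumes H: "subgroup H G" and x: "x \<in> carrier G" and y: "y \<in> carrier G" and e: "x <# H = y <# H"
  shows "inv x \<otimes> y \<in> H"
proof -
  have "y \<in> y <# H" using y subgroup.one_closed[OF H] unfolding l_coset_def by (metis UN_iff r_one singletonI)
  then have "y \<in> x <# H" using e by simp
  then obtain h where h: "h \<in> H" "y = x \<otimes> h" unfolding l_coset_def by blast
  then show ?thesis using x subgroup.mem_carrier[OF H] by simp
qed

lemma lcos_mult_mem:
  assumes H: "subgroup H G" and t: "t \<in> carrier G" and g: "\<gamma> \<in> H"
  shows "(t \<otimes> \<gamma>) <# H = t <# H"
proof -
  have gc: "\<gamma> \<in> carrier G" using g subgroup.mem_carrier[OF H] by blast
  have "(t \<otimes> \<gamma>) <# H = t <# (\<gamma> <# H)" using lcos_m_assoc[OF subgroup.subset[OF H] t gc] by simp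
  also have "\<gamma> <# H = H" using coset_join3[OF gc H g] .
  finally show ?thesis .
qed

lemma reindex:
  assumes f: "filt G Gs"
    and cube: "\<forall>k a. parallelepiped_base k a \<longrightarrow> in_HK_quot G k Gs \<Gamma> (\<lambda>\<omega>. fb (parallelepiped_vertex a \<omega>))"
    and a: "\<alpha> \<in> FE"
  shows "\<exists>c\<in>HKI G \<alpha> Gs. \<forall>\<sigma>\<subseteq>\<alpha>. fb \<sigma> = c \<sigma> <# \<Gamma>"
proof -
  have fa: "finite \<alpha>" and z: "0 \<notin> \<alpha>" using a by (auto simp: FE_def)
  define k where "k = card \<alpha>"
  obtain e where e: "bij_betw e {1..k} \<alpha>" using ex_bij_betw_nat_finite_1[OF fa] unfolding k_def by blast
  have eim: "e ` {1..k} = \<alpha>" using e by (simp add: bij_betw_def)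
  have einj: "inj_on e {1..k}" using e by (simp add: bij_betw_def)
  define a where "a = (\<lambda>i. if i \<in> {1..k} then {e i} else {})"
  have base: "parallelepiped_base k a"
    unfolding parallelepiped_base_def
  proof (intro conjI allI impI)
    fix i assume "i \<le> k"
    show "a i \<in> FE"
    proof (cases "i \<in> {1..k}")
      case True
      then have "e i \<in> \<alpha>" using eim by blast
      then have "e i \<noteq> 0" using z by metis
      then show ?thesis using True by (auto simp: a_def FE_def)
    next
      case False then have "a i = {}" by (simp add: a_def)
      then show ?thesis by (simp add: FE_def)
    qed
  next
    fix i j assume "i \<le> k" "j \<le> k" "i \<noteq> j"
    show "a i \<inter> a j = {}"
    proof (cases "i \<in> {1..k} \<and> j \<in> {1..k}")
      case True
      then have "e i \<noteq> e j" using einj \<open>i \<noteq> j\<close> inj_on_eq_iff by metis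
      then show ?thesis using True by (simp add: a_def)
    next
      case False then show ?thesis by (auto simp: a_def)
    qed
  qed
  have "in_HK_quot G k Gs \<Gamma> (\<lambda>\<omega>. fb (parallelepiped_vertex a \<omega>))" using cube base by blast
  then obtain c where c: "c \<in> HK G k Gs" and cv: "\<forall>\<omega>. \<omega> \<subseteq> {1..k} \<longrightarrow> fb (parallelepiped_vertex a \<omega>) = c \<omega> <# \<Gamma>"
    unfolding in_HK_quot_def by blast
  have c': "c \<in> HKI G {1..k} Gs" using c HK_eq_HKI by blast
  define A where "A = (\<lambda>j. {inv_into {1..k} e j})"
  have AI: "\<forall>j\<in>\<alpha>. A j \<subseteq> {1..k}"
  proof
    fix j assume "j \<in> \<alpha>" then have "j \<in> e ` {1..k}" using eim by simp
    then show "A j \<subseteq> {1..k}" using inv_into_into[of j e "{1..k}"] by (simp add: A_def)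
  qed
  have disj: "\<forall>j\<in>\<alpha>. \<forall>j'\<in>\<alpha>. j \<noteq> j' \<longrightarrow> A j \<inter> A j' = {}"
  proof (intro ballI impI)
    fix j j' assume "j \<in> \<alpha>" "j' \<in> \<alpha>" "j \<noteq> j'"
    then have "inv_into {1..k} e j \<noteq> inv_into {1..k} e j'" using inv_into_injective[of "{1..k}" e j j'] eim by auto
    then show "A j \<inter> A j' = {}" by (simp add: A_def)
  qed
  have P: "(\<lambda>\<omega>. if \<omega> \<subseteq> \<alpha> then c ({} \<union> \<Union>(A ` \<omega>)) else \<one>) \<in> HKI G \<alpha> Gs"
    by (rule pullback[OF f _ c' _ AI _ disj]) auto
  show ?thesis
  proof (rule bexI[OF _ P], intro allI impI)
    fix \<sigma> assume s: "\<sigma> \<subseteq> \<alpha>"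
    define \<omega> where "\<omega> = inv_into {1..k} e ` \<sigma>"
    have u: "{} \<union> \<Union>(A ` \<sigma>) = \<omega>" by (auto simp: A_def \<omega>_def)
    have w: "\<omega> \<subseteq> {1..k}" using s inv_into_into[of _ e "{1..k}"] eim by (auto simp: \<omega>_def)
    have a0: "a 0 = {}" by (simp add: a_def)
    have "\<Union>(a ` \<omega>) = \<Union>((\<lambda>i. {e i}) ` \<omega>)"
      using w by (intro arg_cong[where f=Union] image_cong) (auto simp: a_def)
    also have "\<dots> = e ` \<omega>" by blast
    finally have "parallelepiped_vertex a \<omega> = e ` \<omega>"
      by (simp add: parallelepiped_vertex_def a0)
    also have "\<dots> = (\<lambda>y. e (inv_into {1..k} e y)) ` \<sigma>" by (simp add: \<omega>_def image_image)
    also have "\<dots> = (\<lambda>y. y) ` \<sigma>"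
    proof (rule image_cong[OF refl])
      fix y assume "y \<in> \<sigma>" then have "y \<in> e ` {1..k}" using s eim by blast
      then show "e (inv_into {1..k} e y) = y" by (rule f_inv_into_f)
    qed
    also have "\<dots> = \<sigma>" by simp
    finally have v: "parallelepiped_vertex a \<omega> = \<sigma>" .
    show "fb \<sigma> = (if \<sigma> \<subseteq> \<alpha> then c ({} \<union> \<Union>(A ` \<sigma>)) else \<one>) <# \<Gamma>"
      using cv w v s u by auto
  qed
qed

lemma filtration_filt:
  assumes "filtration G T Gs d" shows "filt G Gs"
proof -
  have G0: "Gs 0 = carrier G" using assms unfolding filtration_def by (elim conjE) assumption
  have L: "\<forall>i. lie_subgroup (Gs i) G T" using assms unfolding filtration_def by (elim conjE) assumption
  have S: "\<forall>i. subgroup (Gs i) G" using L unfolding lie_subgroup_def by simp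
  have Suc: "\<forall>i. Gs (Suc i) \<subseteq> Gs i" using assms unfolding filtration_def by (elim conjE) assumption
  have C: "\<forall>i j. \<forall>x\<in>Gs i. \<forall>y\<in>Gs j. inv x \<otimes> inv y \<otimes> x \<otimes> y \<in> Gs (i + j)"
    using assms unfolding filtration_def by (elim conjE) assumption
  have M: "\<forall>i j. i \<le> j \<longrightarrow> Gs j \<subseteq> Gs i"
  proof (intro allI impI)
    fix i j :: nat assume "i \<le> j"
    then show "Gs j \<subseteq> Gs i" by (rule lift_Suc_antimono_le[of Gs, rotated]) (use Suc in blast)
  qed
  have N: "\<forall>i. \<forall>x\<in>carrier G. \<forall>y\<in>Gs i. inv x \<otimes> y \<otimes> x \<in> Gs i"
  proof (intro allI ballI)
    fix i x y assume x: "x \<in> carrier G" and y: "y \<in> Gs i"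
    have yc: "y \<in> carrier G" using subgroup.mem_carrier[OF S[rule_format] y] .
    have x0: "x \<in> Gs 0" using x G0 by simp
    have "inv y \<otimes> inv x \<otimes> y \<otimes> x \<in> Gs (i + 0)" using C[rule_format, OF y x0] .
    then have "y \<otimes> (inv y \<otimes> inv x \<otimes> y \<otimes> x) \<in> Gs i" using subgroup.m_closed[OF S[rule_format] y] by simp
    then show "inv x \<otimes> y \<otimes> x \<in> Gs i" using x yc by (simp add: m_assoc)
  qed
  show ?thesis unfolding filt_def using S M N C by (intro conjI)
qed


end

definition extC :: "('a,'b) monoid_scheme \<Rightarrow> (nat \<Rightarrow> 'a set) \<Rightarrow> 'a set \<Rightarrow> (nat set \<Rightarrow> 'a set) \<Rightarrow> (nat set \<Rightarrow> 'a) \<Rightarrow> nat set \<Rightarrow> 'a" where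
  "extC G Gs \<Gamma> fb h \<alpha> = (SOME t. t \<in> carrier G \<and> fb \<alpha> = t <#\<^bsub>G\<^esub> \<Gamma> \<and> (\<lambda>\<sigma>. if \<sigma> = \<alpha> then t else res G \<alpha> h \<sigma>) \<in> HKI G \<alpha> Gs)"

primrec gseq :: "('a,'b) monoid_scheme \<Rightarrow> (nat \<Rightarrow> 'a set) \<Rightarrow> 'a set \<Rightarrow> (nat set \<Rightarrow> 'a set) \<Rightarrow> nat \<Rightarrow> nat set \<Rightarrow> 'a" where
  "gseq G Gs \<Gamma> fb 0 = extC G Gs \<Gamma> fb (\<lambda>_. \<one>\<^bsub>G\<^esub>)"
| "gseq G Gs \<Gamma> fb (Suc n) = (\<lambda>\<alpha>. if card \<alpha> \<le> n then gseq G Gs \<Gamma> fb n \<alpha> else extC G Gs \<Gamma> fb (gseq G Gs \<Gamma> fb n) \<alpha>)"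

definition gfin :: "('a,'b) monoid_scheme \<Rightarrow> (nat \<Rightarrow> 'a set) \<Rightarrow> 'a set \<Rightarrow> (nat set \<Rightarrow> 'a set) \<Rightarrow> nat set \<Rightarrow> 'a" where
  "gfin G Gs \<Gamma> fb \<alpha> = gseq G Gs \<Gamma> fb (card \<alpha>) \<alpha>"

lemma extC_cong:
  assumes "\<forall>\<sigma>. \<sigma> \<subset> \<alpha> \<longrightarrow> h \<sigma> = h' \<sigma>"
  shows "extC G Gs \<Gamma> fb h \<alpha> = extC G Gs \<Gamma> fb h' \<alpha>"
proof -
  have "(\<lambda>\<sigma>. if \<sigma> = \<alpha> then t else res G \<alpha> h \<sigma>) = (\<lambda>\<sigma>. if \<sigma> = \<alpha> then t else res G \<alpha> h' \<sigma>)" for t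
    using assms by (auto simp: res_def fun_eq_iff)
  then show ?thesis by (simp add: extC_def)
qed

lemma gseq_stab: "card \<alpha> \<le> n \<Longrightarrow> gseq G Gs \<Gamma> fb n \<alpha> = gfin G Gs \<Gamma> fb \<alpha>"
proof (induct n)
  case 0 then show ?case by (simp add: gfin_def)
next
  case (Suc n)
  show ?case
  proof (cases "card \<alpha> \<le> n")
    case True then show ?thesis using Suc(1) by simp
  next
    case False
    then have "card \<alpha> = Suc n" using Suc(2) by simp
    then show ?thesis by (simp add: gfin_def)
  qed
qed

lemma gfin_ext:
  assumes fa: "finite \<alpha>"
  shows "gfin G Gs \<Gamma> fb \<alpha> = extC G Gs \<Gamma> fb (gfin G Gs \<Gamma> fb) \<alpha>"
proof (cases "card \<alpha>")
  case 0
  then have e: "\<alpha> = {}" using fa by simp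
  have "gfin G Gs \<Gamma> fb \<alpha> = extC G Gs \<Gamma> fb (\<lambda>_. \<one>\<^bsub>G\<^esub>) \<alpha>" using 0 by (simp add: gfin_def)
  also have "\<dots> = extC G Gs \<Gamma> fb (gfin G Gs \<Gamma> fb) \<alpha>" by (rule extC_cong) (simp add: e)
  finally show ?thesis .
next
  case (Suc n)
  have "gfin G Gs \<Gamma> fb \<alpha> = extC G Gs \<Gamma> fb (gseq G Gs \<Gamma> fb n) \<alpha>" using Suc by (simp add: gfin_def)
  also have "\<dots> = extC G Gs \<Gamma> fb (gfin G Gs \<Gamma> fb) \<alpha>"
  proof (rule extC_cong, intro allI impI)
    fix \<sigma> assume "\<sigma> \<subset> \<alpha>"
    then have "card \<sigma> < card \<alpha>" using fa by (rule psubset_card_mono[rotated])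
    then show "gseq G Gs \<Gamma> fb n \<sigma> = gfin G Gs \<Gamma> fb \<sigma>" using Suc by (intro gseq_stab) simp
  qed
  finally show ?thesis .
qed

context group begin

lemma gfin_good:
  assumes f: "filt G Gs" and \<Gamma>: "subgroup \<Gamma> G"
    and cube: "\<forall>k a. parallelepiped_base k a \<longrightarrow> in_HK_quot G k Gs \<Gamma> (\<lambda>\<omega>. fb (parallelepiped_vertex a \<omega>))"
  shows "\<alpha> \<in> FE \<Longrightarrow> gfin G Gs \<Gamma> fb \<alpha> \<in> carrier G \<and> fb \<alpha> = gfin G Gs \<Gamma> fb \<alpha> <# \<Gamma> \<and> res G \<alpha> (gfin G Gs \<Gamma> fb) \<in> HKI G \<alpha> Gs"
proof (induct "card \<alpha>" arbitrary: \<alpha> rule: less_induct)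
  case less
  let ?g = "gfin G Gs \<Gamma> fb"
  have fa: "finite \<alpha>" using less(2) by (simp add: FE_def)
  have IH: "?g \<beta> \<in> carrier G \<and> fb \<beta> = ?g \<beta> <# \<Gamma> \<and> res G \<beta> ?g \<in> HKI G \<beta> Gs" if b: "\<beta> \<subset> \<alpha>" for \<beta>
  proof -
    have "card \<beta> < card \<alpha>" using b fa by (rule psubset_card_mono[rotated])
    moreover have "\<beta> \<in> FE" using FE_subset[OF less(2)] b by blast
    ultimately show ?thesis using less(1) by blast
  qed
  have ex: "\<exists>t. t \<in> carrier G \<and> fb \<alpha> = t <# \<Gamma> \<and> (\<lambda>\<sigma>. if \<sigma> = \<alpha> then t else res G \<alpha> ?g \<sigma>) \<in> HKI G \<alpha> Gs"
  proof -
    have xc: "\<forall>\<sigma>. \<sigma> \<subset> \<alpha> \<longrightarrow> ?g \<sigma> \<in> carrier G" using IH by blast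
    have fac: "\<forall>i\<in>\<alpha>. res G (\<alpha> - {i}) ?g \<in> HKI G (\<alpha> - {i}) Gs"
    proof
      fix i assume "i \<in> \<alpha>" then have "\<alpha> - {i} \<subset> \<alpha>" by blast
      then show "res G (\<alpha> - {i}) ?g \<in> HKI G (\<alpha> - {i}) Gs" using IH by blast
    qed
    obtain t0 where t0: "t0 \<in> carrier G" and X: "(\<lambda>\<sigma>. if \<sigma> = \<alpha> then t0 else res G \<alpha> ?g \<sigma>) \<in> HKI G \<alpha> Gs"
      using corner[OF fa f xc fac] by blast
    let ?xc = "\<lambda>\<sigma>. if \<sigma> = \<alpha> then t0 else res G \<alpha> ?g \<sigma>"
    obtain c' where c': "c' \<in> HKI G \<alpha> Gs" and cv: "\<forall>\<sigma>\<subseteq>\<alpha>. fb \<sigma> = c' \<sigma> <# \<Gamma>"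
      using reindex[OF f cube less(2)] by blast
    have c'c: "c' \<sigma> \<in> carrier G" for \<sigma> using HKI_carrier[OF f c'] .
    have xcc: "?xc \<sigma> \<in> carrier G" for \<sigma> using HKI_carrier[OF f X] .
    let ?d = "\<lambda>\<sigma>. inv (?xc \<sigma>) \<otimes> c' \<sigma>"
    have D: "?d \<in> HKI G \<alpha> Gs" using HKI.mult[OF HKI.inv[OF X] c'] .
    have low: "\<forall>\<beta>. \<beta> \<subset> \<alpha> \<longrightarrow> ?d \<beta> \<in> \<Gamma>"
    proof (intro allI impI)
      fix \<beta> assume b: "\<beta> \<subset> \<alpha>"
      have e1: "?xc \<beta> = ?g \<beta>" using b by (auto simp: res_def)
      have "?g \<beta> <# \<Gamma> = c' \<beta> <# \<Gamma>" using IH[OF b] cv b by auto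
      then have "inv (?g \<beta>) \<otimes> c' \<beta> \<in> \<Gamma>" using lcos_eq_imp[OF \<Gamma>] IH[OF b] c'c by blast
      then show "?d \<beta> \<in> \<Gamma>" using e1 by simp
    qed
    obtain n \<gamma> where n: "n \<in> Gs (card \<alpha>)" and \<gamma>: "\<gamma> \<in> \<Gamma>" and dn: "?d \<alpha> = n \<otimes> \<gamma>"
      using gamma_lemma[OF fa f \<Gamma> D low] by blast
    have nc: "n \<in> carrier G" using filt_carrier[OF f n] .
    have gc: "\<gamma> \<in> carrier G" using \<gamma> subgroup.mem_carrier[OF \<Gamma>] by blast
    define t where "t = t0 \<otimes> n"
    have tc: "t \<in> carrier G" using t0 nc by (simp add: t_def)
    have eq: "(\<lambda>\<sigma>. if \<sigma> = \<alpha> then t else res G \<alpha> ?g \<sigma>) = (\<lambda>\<sigma>. ?xc \<sigma> \<otimes> genI G \<alpha> n \<alpha> \<sigma>)"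
    proof
      fix \<sigma>
      show "(if \<sigma> = \<alpha> then t else res G \<alpha> ?g \<sigma>) = ?xc \<sigma> \<otimes> genI G \<alpha> n \<alpha> \<sigma>"
      proof (cases "\<sigma> = \<alpha>")
        case True then show ?thesis by (simp add: t_def genI_def)
      next
        case False
        have "genI G \<alpha> n \<alpha> \<sigma> = \<one>" using False by (auto simp: genI_def)
        then show ?thesis using False xcc[of \<sigma>] by simp
      qed
    qed
    have cube_t: "(\<lambda>\<sigma>. if \<sigma> = \<alpha> then t else res G \<alpha> ?g \<sigma>) \<in> HKI G \<alpha> Gs"
      unfolding eq by (rule HKI.mult[OF X HKI.gen]) (use n in auto)
    have "c' \<alpha> = t0 \<otimes> ?d \<alpha>" using t0 c'c by simp
    also have "\<dots> = t \<otimes> \<gamma>" using dn t0 nc gc by (simp add: t_def m_assoc)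
    finally have "fb \<alpha> = (t \<otimes> \<gamma>) <# \<Gamma>" using cv by simp
    also have "\<dots> = t <# \<Gamma>" using lcos_mult_mem[OF \<Gamma> tc \<gamma>] .
    finally show ?thesis using tc cube_t by blast
  qed
  have P: "?g \<alpha> \<in> carrier G \<and> fb \<alpha> = ?g \<alpha> <# \<Gamma> \<and> (\<lambda>\<sigma>. if \<sigma> = \<alpha> then ?g \<alpha> else res G \<alpha> ?g \<sigma>) \<in> HKI G \<alpha> Gs"
    unfolding gfin_ext[OF fa, of G Gs \<Gamma> fb] extC_def[of G Gs \<Gamma> fb "gfin G Gs \<Gamma> fb" \<alpha>]
    using someI_ex[OF ex] by (simp add: gfin_ext[OF fa, symmetric] extC_def)
  have "(\<lambda>\<sigma>. if \<sigma> = \<alpha> then ?g \<alpha> else res G \<alpha> ?g \<sigma>) = res G \<alpha> ?g" by (auto simp: res_def fun_eq_iff)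
  then show ?case using P by simp
qed

end

theorem proposition2p10:
  fixes G :: "('a, 'b) monoid_scheme" and T :: "'a topology"
    and Gs :: "nat \<Rightarrow> 'a set" and d :: nat and \<Gamma> :: "'a set"
    and fb :: "nat set \<Rightarrow> 'a set"
  assumes "lie_group G T"
    and "filtration G T Gs d"
    and "discrete_subgroup \<Gamma> G T"
    and "cocompact_in \<Gamma> (carrier G) G T"
    and "rational_filtration G T Gs \<Gamma>"
    and "\<forall>\<alpha>\<in>FE. \<exists>x\<in>carrier G. fb \<alpha> = x <#\<^bsub>G\<^esub> \<Gamma>"
  shows "poly_map_quot G Gs \<Gamma> fb \<longleftrightarrow>
    (\<forall>k a. parallelepiped_base k a \<longrightarrow>
       in_HK_quot G k Gs \<Gamma> (\<lambda>\<omega>. fb (parallelepiped_vertex a \<omega>)))"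
proof -
  have grp: "group G" using assms(1) unfolding lie_group_def topological_group_def by (elim conjE)
  interpret group G by (rule grp)
  have \<Gamma>: "subgroup \<Gamma> G" using assms(3) unfolding discrete_subgroup_def by (elim conjE)
  have f: "filt G Gs" by (rule filtration_filt[OF assms(2)])
  have top: "Gs (Suc d) = {\<one>\<^bsub>G\<^esub>}" using assms(2) unfolding filtration_def by (elim conjE) assumption
  show ?thesis
  proof
    assume "poly_map_quot G Gs \<Gamma> fb"
    then obtain g where gp: "poly_map G Gs g" and gf: "\<forall>\<alpha>\<in>FE. fb \<alpha> = g \<alpha> <#\<^bsub>G\<^esub> \<Gamma>"
      unfolding poly_map_quot_def by blast
    have cub: "\<forall>\<alpha>\<in>FE. res G \<alpha> g \<in> HKI G \<alpha> Gs" using poly_cubes[OF gp] f by blast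
    show "\<forall>k a. parallelepiped_base k a \<longrightarrow> in_HK_quot G k Gs \<Gamma> (\<lambda>\<omega>. fb (parallelepiped_vertex a \<omega>))"
    proof (intro allI impI)
      fix k a assume base: "parallelepiped_base k a"
      have aFE: "\<forall>i\<le>k. a i \<in> FE" and disj: "\<forall>i\<le>k. \<forall>j\<le>k. i \<noteq> j \<longrightarrow> a i \<inter> a j = {}"
        using base unfolding parallelepiped_base_def by blast+
      let ?\<alpha> = "parallelepiped_vertex a {1..k}"
      have vFE: "parallelepiped_vertex a \<omega> \<in> FE" if "\<omega> \<subseteq> {1..k}" for \<omega>
      proof -
        have "finite \<omega>" using that finite_subset by blast
        moreover have "\<forall>i\<in>\<omega>. a i \<in> FE" using aFE that by auto
        moreover have "a 0 \<in> FE" using aFE by simp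
        ultimately show ?thesis by (auto simp: parallelepiped_vertex_def FE_def)
      qed
      have aF: "?\<alpha> \<in> FE" using vFE by simp
      have fin: "finite ?\<alpha>" using aF by (simp add: FE_def)
      have c: "res G ?\<alpha> g \<in> HKI G ?\<alpha> Gs" using cub aF by blast
      have P: "(\<lambda>\<omega>. if \<omega> \<subseteq> {1..k} then res G ?\<alpha> g (a 0 \<union> \<Union>(a ` \<omega>)) else \<one>\<^bsub>G\<^esub>) \<in> HKI G {1..k} Gs"
      proof (rule pullback[OF f fin c])
        show "a 0 \<subseteq> ?\<alpha>" by (auto simp: parallelepiped_vertex_def)
        show "\<forall>j\<in>{1..k}. a j \<subseteq> ?\<alpha>" by (auto simp: parallelepiped_vertex_def)
        show "\<forall>j\<in>{1..k}. a 0 \<inter> a j = {}" using disj by auto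
        show "\<forall>j\<in>{1..k}. \<forall>j'\<in>{1..k}. j \<noteq> j' \<longrightarrow> a j \<inter> a j' = {}" using disj by auto
      qed
      show "in_HK_quot G k Gs \<Gamma> (\<lambda>\<omega>. fb (parallelepiped_vertex a \<omega>))"
        unfolding in_HK_quot_def
      proof (rule bexI[of _ "\<lambda>\<omega>. if \<omega> \<subseteq> {1..k} then res G ?\<alpha> g (a 0 \<union> \<Union>(a ` \<omega>)) else \<one>\<^bsub>G\<^esub>"], intro allI impI)
        fix \<omega> :: "nat set" assume w: "\<omega> \<subseteq> {1..k}"
        have sub: "parallelepiped_vertex a \<omega> \<subseteq> ?\<alpha>" using w by (auto simp: parallelepiped_vertex_def)
        show "fb (parallelepiped_vertex a \<omega>) = (if \<omega> \<subseteq> {1..k} then res G ?\<alpha> g (a 0 \<union> \<Union>(a ` \<omega>)) else \<one>\<^bsub>G\<^esub>) <#\<^bsub>G\<^esub> \<Gamma>"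
          using w sub gf vFE[OF w] by (simp add: res_def parallelepiped_vertex_def)
      next
        show "(\<lambda>\<omega>. if \<omega> \<subseteq> {1..k} then res G ?\<alpha> g (a 0 \<union> \<Union>(a ` \<omega>)) else \<one>\<^bsub>G\<^esub>) \<in> HK G k Gs"
          using P HK_eq_HKI by blast
      qed
    qed
  next
    assume cube: "\<forall>k a. parallelepiped_base k a \<longrightarrow> in_HK_quot G k Gs \<Gamma> (\<lambda>\<omega>. fb (parallelepiped_vertex a \<omega>))"
    let ?g = "gfin G Gs \<Gamma> fb"
    have good: "\<forall>\<alpha>\<in>FE. ?g \<alpha> \<in> carrier G \<and> fb \<alpha> = ?g \<alpha> <#\<^bsub>G\<^esub> \<Gamma> \<and> res G \<alpha> ?g \<in> HKI G \<alpha> Gs"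
      using gfin_good[OF f \<Gamma> cube] by blast
    have "poly_map G Gs ?g" by (rule cubes_poly[OF f top]) (use good in blast)
    then show "poly_map_quot G Gs \<Gamma> fb" unfolding poly_map_quot_def using good by blast
  qed
qed

end
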